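(* For all integers $t,n$: (i) the restriction $\phi_*:X_{t,n}\to Y_t$ is injective; (ii) there are bijections $\alpha:X_{t,n}\to X_{-t,n+6}$ and $\beta:Y_t\to Y_{-t}$ such that $\phi_*\circ\alpha=\beta\circ\phi_*$ on $X_{t,n}$; (iii) there is a bijection $\gamma:X_{t,n}\to X_{t,n+12}$ such that $\phi_*\circ\gamma=\phi_*$ on $X_{t,n}$; (iv) the restriction $\phi_*:\coprod_{j=0}^{11}X_{t,n+j}\to Y_t$ is a bijection.
   Context: $B_3=\langle\sigma_1,\sigma_2:\sigma_1\sigma_2\sigma_1=\sigma_2\sigma_1\sigma_2\rangle$. The homomorphism $\phi:B_3\to\mathrm{SL}_2(\mathbb{Z})$ is defined by $\phi(\sigma_1)=\begin{bmatrix}1&1\\0&1\end{bmatrix}$, $\phi(\sigma_2)=\begin{bmatrix}1&0\\-1&1\end{bmatrix}$; it is surjective and induces a map $\phi_*$ from the set of conjugacy classes of $B_3$ to the set of conjugacy classes of $\mathrm{SL}_2(\mathbb{Z})$. Let $\epsilon:B_3\to\mathbb{Z}$ be the exponent sum homomorphism ($\epsilon(\sigma_1)=\epsilon(\sigma_2)=1$), and define the trace of $g\in B_3$ as $\mathrm{tr}(\phi(g))$; both are class functions. $X_{t,n}$ is the set of conjugacy classes in $B_3$ of trace $t$ and exponent sum $n$, and $Y_t$ is the set of conjugacy classes in $\mathrm{SL}_2(\mathbb{Z})$ of trace $t$. *)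

theory Defs
  imports Main
begin

datatype gen = Sig1 | Sig2

text \<open>A letter is a generator with a sign: (g, True) is g, (g, False) is g inverse.\<close>
type_synonym letter = "gen \<times> bool"
type_synonym word = "letter list"

definition inv_letter :: "letter \<Rightarrow> letter" where
  "inv_letter x = (fst x, \<not> snd x)"

definition inv_word :: "word \<Rightarrow> word" where
  "inv_word w = rev (map inv_letter w)"

text \<open>Equality in B_3 = free group on sigma1, sigma2 modulo the braid relation:
  the smallest equivalence relation on words closed under inserting/removing
  x x^-1 and under replacing sigma1 sigma2 sigma1 by sigma2 sigma1 sigma2 inside a word.\<close>
inductive braid_eq :: "word \<Rightarrow> word \<Rightarrow> bool" where
  refl: "braid_eq u u"
| sym: "braid_eq u v \<Longrightarrow> braid_eq v u"
| trans: "braid_eq u v \<Longrightarrow> braid_eq v w \<Longrightarrow> braid_eq u w"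
| cancel: "braid_eq (u @ [x, inv_letter x] @ v) (u @ v)"
| braid: "braid_eq (u @ [(Sig1, True), (Sig2, True), (Sig1, True)] @ v)
                   (u @ [(Sig2, True), (Sig1, True), (Sig2, True)] @ v)"

definition braid_conj :: "word \<Rightarrow> word \<Rightarrow> bool" where
  "braid_conj u v \<longleftrightarrow> (\<exists>w. braid_eq (w @ u @ inv_word w) v)"

definition braid_class :: "word \<Rightarrow> word set" where
  "braid_class u = {v. braid_conj u v}"

fun exp_sum :: "word \<Rightarrow> int" where
  "exp_sum [] = 0"
| "exp_sum (x # w) = (if snd x then 1 else -1) + exp_sum w"

text \<open>(a, b, c, d) represents the matrix [[a, b], [c, d]].\<close>
type_synonym mat2 = "int \<times> int \<times> int \<times> int"

definition mmul :: "mat2 \<Rightarrow> mat2 \<Rightarrow> mat2" where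
  "mmul A B = (case A of (a, b, c, d) \<Rightarrow> case B of (e, f, g, h) \<Rightarrow>
      (a*e + b*g, a*f + b*h, c*e + d*g, c*f + d*h))"

definition mid :: mat2 where "mid = (1, 0, 0, 1)"

definition mdet :: "mat2 \<Rightarrow> int" where
  "mdet A = (case A of (a, b, c, d) \<Rightarrow> a*d - b*c)"

definition mtr :: "mat2 \<Rightarrow> int" where
  "mtr A = (case A of (a, b, c, d) \<Rightarrow> a + d)"

definition SL2Z :: "mat2 set" where
  "SL2Z = {A. mdet A = 1}"

definition sl2_conj :: "mat2 \<Rightarrow> mat2 \<Rightarrow> bool" where
  "sl2_conj A B \<longleftrightarrow> (\<exists>P \<in> SL2Z. mmul P A = mmul B P)"

definition sl2_class :: "mat2 \<Rightarrow> mat2 set" where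
  "sl2_class A = {B \<in> SL2Z. sl2_conj A B}"

fun letter_mat :: "letter \<Rightarrow> mat2" where
  "letter_mat (Sig1, True) = (1, 1, 0, 1)"
| "letter_mat (Sig1, False) = (1, -1, 0, 1)"
| "letter_mat (Sig2, True) = (1, 0, -1, 1)"
| "letter_mat (Sig2, False) = (1, 0, 1, 1)"

fun phi :: "word \<Rightarrow> mat2" where
  "phi [] = mid"
| "phi (x # w) = mmul (letter_mat x) (phi w)"

definition btr :: "word \<Rightarrow> int" where
  "btr w = mtr (phi w)"

text \<open>phi_* on conjugacy classes (well defined since phi is a homomorphism).\<close>
definition phi_star :: "word set \<Rightarrow> mat2 set" where
  "phi_star C = sl2_class (phi (SOME w. w \<in> C))"

definition X :: "int \<Rightarrow> int \<Rightarrow> word set set" where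
  "X t n = {braid_class w | w. btr w = t \<and> exp_sum w = n}"

definition Y :: "int \<Rightarrow> mat2 set set" where
  "Y t = {sl2_class A | A. A \<in> SL2Z \<and> mtr A = t}"

end

theory Submission imports Defs begin

lemma inv_letter_inv[simp]: "inv_letter (inv_letter x) = x"
  by (simp add: inv_letter_def)

lemma inv_word_simps[simp]: "inv_word [] = []" "inv_word (x # w) = inv_word w @ [inv_letter x]"
  "inv_word (u @ v) = inv_word v @ inv_word u" "inv_word (inv_word w) = w"
  by (simp_all add: inv_word_def rev_map comp_def)

lemma be_cong: "braid_eq a b \<Longrightarrow> braid_eq (p @ a @ q) (p @ b @ q)"
proof (induction rule: braid_eq.induct)
  case (refl u) then show ?case by (rule braid_eq.refl)
next
  case (sym u v) then show ?case by (simp add: braid_eq.sym)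
next
  case (trans u v w) then show ?case by (metis braid_eq.trans)
next
  case (cancel u x v) then show ?case using braid_eq.cancel[of "p @ u" x "v @ q"] by simp
next
  case (braid u v) then show ?case using braid_eq.braid[of "p @ u" "v @ q"] by simp
qed

lemma be_congL: "braid_eq a b \<Longrightarrow> braid_eq (p @ a) (p @ b)"
  using be_cong[of a b p "[]"] by simp
lemma be_congR: "braid_eq a b \<Longrightarrow> braid_eq (a @ q) (b @ q)"
  using be_cong[of a b "[]" q] by simp
lemma be_app: "braid_eq a b \<Longrightarrow> braid_eq c d \<Longrightarrow> braid_eq (a @ c) (b @ d)"
  by (meson be_congL be_congR braid_eq.trans)

lemma be_cancel1: "braid_eq ([x, inv_letter x]) []"
  using braid_eq.cancel[of "[]" x "[]"] by simp
lemma be_cancel2: "braid_eq ([inv_letter x, x]) []"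
  using be_cancel1[of "inv_letter x"] by simp

lemma be_inv_r: "braid_eq (w @ inv_word w) []"
proof (induction w)
  case Nil then show ?case by (simp add: braid_eq.refl)
next
  case (Cons x w)
  have "braid_eq ([x] @ (w @ inv_word w) @ [inv_letter x]) ([x] @ [] @ [inv_letter x])"
    by (rule be_cong[OF Cons])
  then have "braid_eq ((x # w) @ inv_word (x # w)) [x, inv_letter x]" by simp
  then show ?case using be_cancel1 braid_eq.trans by blast
qed

lemma be_inv_l: "braid_eq (inv_word w @ w) []"
  using be_inv_r[of "inv_word w"] by simp

lemma phi_append: "phi (u @ v) = mmul (phi u) (phi v)"
proof (induction u)
  case Nil then show ?case by (cases "phi v") (simp add: mmul_def mid_def)
next
  case (Cons x u) then show ?case
    by (cases "phi u"; cases "phi v"; cases "letter_mat x") (simp add: mmul_def algebra_simps)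
qed

lemma mmul_assoc: "mmul (mmul A B) C = mmul A (mmul B C)"
  by (cases A; cases B; cases C) (simp add: mmul_def algebra_simps)
lemma mmul_mid[simp]: "mmul mid A = A" "mmul A mid = A"
  by (cases A; simp add: mmul_def mid_def)+

lemma phi_letter_inv: "mmul (letter_mat x) (letter_mat (inv_letter x)) = mid"
  by (cases x; cases "fst x"; cases "snd x") (auto simp: inv_letter_def mmul_def mid_def)

lemma phi_single: "phi [x] = letter_mat x" by simp

lemma phi_be: "braid_eq u v \<Longrightarrow> phi u = phi v"
proof (induction rule: braid_eq.induct)
  case (cancel u x v)
  have "phi [x, inv_letter x] = mid"
    using phi_letter_inv[of x] by simp
  then show ?case by (simp add: phi_append mmul_assoc[symmetric])
next
  case (braid u v)
  have "phi [(Sig1, True), (Sig2, True), (Sig1, True)] = phi [(Sig2, True), (Sig1, True), (Sig2, True)]"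
    by (simp add: mmul_def mid_def)
  then show ?case using phi_append[of "[(Sig1, True), (Sig2, True), (Sig1, True)]" v]
    phi_append[of "[(Sig2, True), (Sig1, True), (Sig2, True)]" v] by (simp add: phi_append del: phi.simps)
qed auto

lemma exp_append: "exp_sum (u @ v) = exp_sum u + exp_sum v"
  by (induction u) auto
lemma exp_inv: "exp_sum (inv_word w) = - exp_sum w"
  by (induction w) (auto simp: exp_append inv_letter_def)
lemma exp_be: "braid_eq u v \<Longrightarrow> exp_sum u = exp_sum v"
  by (induction rule: braid_eq.induct) (auto simp: exp_append inv_letter_def)

lemma phi_inv_r: "mmul (phi w) (phi (inv_word w)) = mid"
  using phi_be[OF be_inv_r[of w]] by (simp add: phi_append)
lemma phi_inv_l: "mmul (phi (inv_word w)) (phi w) = mid"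
  using phi_be[OF be_inv_l[of w]] by (simp add: phi_append)

lemma mdet_mul: "mdet (mmul A B) = mdet A * mdet B"
  by (cases A; cases B) (simp add: mmul_def mdet_def algebra_simps)
lemma mdet_phi: "mdet (phi w) = 1"
proof (induction w)
  case (Cons x w)
  have "mdet (letter_mat x) = 1" by (cases x rule: letter_mat.cases) (auto simp: mdet_def)
  then show ?case using Cons by (simp add: mdet_mul)
qed (simp add: mid_def mdet_def)


lemmas [trans] = braid_eq.trans

abbreviation "s1 \<equiv> (Sig1, True)"
abbreviation "s2 \<equiv> (Sig2, True)"
abbreviation "Xw \<equiv> [s1, s2, s1]"
abbreviation "Yw \<equiv> [s1, s2]"
abbreviation "XX \<equiv> Xw @ Xw"
abbreviation "Zw \<equiv> inv_word XX"

lemma be_braid0: "braid_eq [s1, s2, s1] [s2, s1, s2]"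
  using braid_eq.braid[of "[]" "[]"] by simp

lemma Y3: "braid_eq (Yw @ Yw @ Yw) XX"
proof -
  have "braid_eq ([s1, s2, s1] @ [s2, s1, s2] @ []) ([s1, s2, s1] @ [s1, s2, s1] @ [])"
    by (rule be_cong) (rule braid_eq.sym[OF be_braid0])
  then show ?thesis by simp
qed

lemma xs1: "braid_eq (Xw @ [s1]) ([s2] @ Xw)"
proof -
  have "braid_eq ([] @ [s2, s1, s2] @ [s1]) ([] @ [s1, s2, s1] @ [s1])"
    by (rule be_cong) (rule braid_eq.sym[OF be_braid0])
  then show ?thesis by (simp add: braid_eq.sym)
qed

lemma xs2: "braid_eq (Xw @ [s2]) ([s1] @ Xw)"
proof -
  have "braid_eq ([s1] @ [s2, s1, s2] @ []) ([s1] @ [s1, s2, s1] @ [])"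
    by (rule be_cong) (rule braid_eq.sym[OF be_braid0])
  then show ?thesis by simp
qed

lemma XX_s1: "braid_eq (XX @ [s1]) ([s1] @ XX)"
proof -
  have "braid_eq (Xw @ (Xw @ [s1])) (Xw @ ([s2] @ Xw))" by (rule be_congL[OF xs1])
  also have "braid_eq (Xw @ [s2] @ Xw) ([s1] @ Xw @ Xw)"
    using be_congR[OF xs2, of Xw] by simp
  finally show ?thesis by simp
qed

lemma XX_s2: "braid_eq (XX @ [s2]) ([s2] @ XX)"
proof -
  have "braid_eq (Xw @ (Xw @ [s2])) (Xw @ ([s1] @ Xw))" by (rule be_congL[OF xs2])
  also have "braid_eq (Xw @ [s1] @ Xw) ([s2] @ Xw @ Xw)"
    using be_congR[OF xs1, of Xw] by simp
  finally show ?thesis by simp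
qed

definition pos :: "word \<Rightarrow> bool" where "pos w = (\<forall>l\<in>set w. snd l)"

lemma XX_central: "pos w \<Longrightarrow> braid_eq (XX @ w) (w @ XX)"
proof (induction w)
  case Nil then show ?case by (simp add: braid_eq.refl)
next
  case (Cons l w)
  then have p: "pos w" and l: "snd l" by (auto simp: pos_def)
  have a: "braid_eq (XX @ [l]) ([l] @ XX)"
    using l XX_s1 XX_s2 by (cases l; cases "fst l") auto
  have "braid_eq (XX @ [l] @ w) ([l] @ XX @ w)" using be_congR[OF a, of w] by simp
  also have "braid_eq ([l] @ XX @ w) ([l] @ w @ XX)" by (rule be_congL[OF Cons.IH[OF p]])
  finally show ?case by simp
qed

lemma Z_central: "pos w \<Longrightarrow> braid_eq (Zw @ w) (w @ Zw)"
proof -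
  assume p: "pos w"
  have 1: "braid_eq (Zw @ w) (Zw @ w @ (XX @ Zw))"
    using be_congL[OF braid_eq.sym[OF be_inv_r[of XX]], of "Zw @ w"] by simp
  have 2: "braid_eq (Zw @ w @ XX @ Zw) (Zw @ XX @ w @ Zw)"
    using be_cong[OF braid_eq.sym[OF XX_central[OF p]], of Zw Zw] by simp
  have 3: "braid_eq (Zw @ XX @ w @ Zw) (w @ Zw)"
    using be_congR[OF be_inv_l[of XX], of "w @ Zw"] by simp
  show ?thesis using 1 2 3 braid_eq.trans by blast
qed

lemma concat_rep_Suc: "concat (replicate (Suc n) x) = concat (replicate n x) @ x"
  by (induction n) auto

definition Dw :: "int \<Rightarrow> word" where
  "Dw m = (if 0 \<le> m then concat (replicate (nat m) XX) else concat (replicate (nat (-m)) Zw))"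

lemma D_succ: "braid_eq (Dw m @ XX) (Dw (m + 1))"
proof (cases "0 \<le> m")
  case True
  then have "nat (m + 1) = Suc (nat m)" by simp
  then show ?thesis using True by (simp add: Dw_def concat_rep_Suc braid_eq.refl del: replicate.simps inv_word_simps)
next
  case False
  then have e: "nat (-m) = Suc (nat (-(m+1)))" by simp
  have "Dw m = Dw (m+1) @ Zw"
  proof (cases "m = -1")
    case True then show ?thesis by (simp add: Dw_def del: inv_word_simps)
  next
    case False
    with \<open>\<not> 0 \<le> m\<close> have "\<not> 0 \<le> m + 1" by simp
    then show ?thesis using \<open>\<not> 0 \<le> m\<close> e by (simp add: Dw_def concat_rep_Suc del: replicate.simps inv_word_simps)
  qed
  then have "Dw m @ XX = Dw (m+1) @ (Zw @ XX) @ []" by simp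
  also have "braid_eq \<dots> (Dw (m+1) @ [] @ [])" by (rule be_cong, rule be_inv_l)
  finally show ?thesis by simp
qed

lemma D_pred: "braid_eq (Dw m @ Zw) (Dw (m - 1))"
proof -
  have "braid_eq (Dw (m - 1) @ XX @ Zw) (Dw (m - 1 + 1) @ Zw)"
    using be_congR[OF D_succ[of "m - 1"], of Zw] by simp
  then have "braid_eq (Dw m @ Zw) (Dw (m - 1) @ XX @ Zw)" by (simp add: braid_eq.sym)
  also have "braid_eq (Dw (m - 1) @ XX @ Zw) (Dw (m - 1) @ [])" by (rule be_congL, rule be_inv_r)
  finally show ?thesis by simp
qed

lemma D_XX_move: "pos b \<Longrightarrow> braid_eq (Dw m @ b @ XX) (Dw (m+1) @ b)"
proof -
  assume "pos b"
  have "braid_eq (Dw m @ b @ XX) (Dw m @ XX @ b)"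
    by (rule be_congL, rule braid_eq.sym, rule XX_central[OF \<open>pos b\<close>])
  also have "braid_eq (Dw m @ XX @ b) (Dw (m+1) @ b)" using be_congR[OF D_succ] by simp
  finally show ?thesis by simp
qed

lemma D_Z_move: "pos b \<Longrightarrow> braid_eq (Dw m @ b @ Zw) (Dw (m - 1) @ b)"
proof -
  assume "pos b"
  have "braid_eq (Dw m @ b @ Zw) (Dw m @ Zw @ b)"
    by (rule be_congL, rule braid_eq.sym, rule Z_central[OF \<open>pos b\<close>])
  also have "braid_eq (Dw m @ Zw @ b) (Dw (m - 1) @ b)" using be_congR[OF D_pred] by simp
  finally show ?thesis by simp
qed

definition Yp :: "nat \<Rightarrow> word" where "Yp e = concat (replicate e Yw)"

definition body :: "bool \<Rightarrow> nat list \<Rightarrow> nat \<Rightarrow> word" where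
  "body a es c = (if a then Xw else []) @ concat (map (\<lambda>e. Yp e @ Xw) es) @ Yp c"

lemma pos_app[simp]: "pos (u @ v) = (pos u \<and> pos v)" by (auto simp: pos_def)
lemma pos_Yp: "pos (Yp e)" by (auto simp: pos_def Yp_def)
lemma pos_body: "pos (body a es c)"
  by (auto simp: pos_def body_def Yp_def)

fun realize :: "int \<times> bool \<times> nat list \<times> nat \<Rightarrow> word" where
  "realize (m, a, es, c) = Dw m @ body a es c"

fun my :: "int \<times> bool \<times> nat list \<times> nat \<Rightarrow> int \<times> bool \<times> nat list \<times> nat" where
  "my (m, a, es, c) = (if c = 2 then (m + 1, a, es, 0) else (m, a, es, Suc c))"

fun mx :: "int \<times> bool \<times> nat list \<times> nat \<Rightarrow> int \<times> bool \<times> nat list \<times> nat" where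
  "mx (m, a, es, c) = (if c \<noteq> 0 then (m, a, es @ [c], 0)
     else if es = [] then (if a then (m + 1, False, [], 0) else (m, True, [], 0))
     else (m + 1, a, butlast es, last es))"

fun dec :: "int \<times> bool \<times> nat list \<times> nat \<Rightarrow> int \<times> bool \<times> nat list \<times> nat" where
  "dec (m, r) = (m - 1, r)"

fun valid :: "int \<times> bool \<times> nat list \<times> nat \<Rightarrow> bool" where
  "valid (m, a, es, c) = (c \<le> 2 \<and> set es \<subseteq> {1, 2})"

lemma Yp_Suc: "Yp (Suc c) = Yp c @ Yw"
  by (simp add: Yp_def concat_rep_Suc del: replicate.simps)

lemma realize_Z: "braid_eq (realize st @ Zw) (realize (dec st))"
proof -
  obtain m a es c where st: "st = (m, a, es, c)" by (cases st) auto
  show ?thesis unfolding st using D_Z_move[OF pos_body, of m a es c] by (simp del: inv_word_simps)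
qed

lemma realize_Y: "braid_eq (realize st @ Yw) (realize (my st))"
proof -
  obtain m a es c where st: "st = (m, a, es, c)" by (cases st) auto
  show ?thesis
  proof (cases "c = 2")
    case False
    then show ?thesis by (simp add: st body_def Yp_Suc braid_eq.refl)
  next
    case True
    have "realize st @ Yw = Dw m @ body a es 0 @ (Yw @ Yw @ Yw)"
      by (simp add: st True body_def Yp_def numeral_2_eq_2)
    also have "braid_eq \<dots> (Dw m @ body a es 0 @ XX)" by (rule be_congL, rule be_congL, rule Y3)
    also have "braid_eq \<dots> (Dw (m+1) @ body a es 0)" by (rule D_XX_move[OF pos_body])
    finally show ?thesis by (simp add: st True)
  qed
qed

lemma realize_X: "braid_eq (realize st @ Xw) (realize (mx st))"
proof -
  obtain m a es c where st: "st = (m, a, es, c)" by (cases st) auto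
  show ?thesis
  proof (cases "c = 0")
    case False
    then show ?thesis by (simp add: st body_def Yp_def braid_eq.refl)
  next
    case c0: True
    show ?thesis
    proof (cases "es = []")
      case True
      show ?thesis
      proof (cases a)
        case False then show ?thesis using c0 True by (simp add: st body_def Yp_def braid_eq.refl)
      next
        case a: True
        have "realize st @ Xw = Dw m @ [] @ XX" by (simp add: st c0 True a body_def Yp_def)
        also have "braid_eq \<dots> (Dw (m+1) @ [])" by (rule D_XX_move) (simp add: pos_def)
        finally show ?thesis by (simp add: st c0 True a body_def Yp_def)
      qed
    next
      case False
      then obtain es' e where es: "es = es' @ [e]" by (metis append_butlast_last_id)
      have "realize st @ Xw = Dw m @ body a es' e @ XX" by (simp add: st c0 es body_def Yp_def)
      also have "braid_eq \<dots> (Dw (m+1) @ body a es' e)" by (rule D_XX_move[OF pos_body])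
      finally show ?thesis by (simp add: st c0 es)
    qed
  qed
qed

lemma valid_my: "valid st \<Longrightarrow> valid (my st)" by (cases st) auto
lemma valid_mx: "valid st \<Longrightarrow> valid (mx st)"
proof -
  assume v: "valid st"
  obtain m a es c where st: "st = (m, a, es, c)" by (cases st) auto
  have "es \<noteq> [] \<Longrightarrow> last es \<in> {1,2}" using v st last_in_set by auto
  moreover have "set (butlast es) \<subseteq> {1,2}" using v st in_set_butlastD by fastforce
  ultimately show ?thesis using v st by auto
qed
lemma valid_dec: "valid st \<Longrightarrow> valid (dec st)" by (cases st) auto


lemma letter_from_XX: "braid_eq (XX @ [l]) r \<Longrightarrow> braid_eq [l] (Zw @ r)"
proof -
  assume h: "braid_eq (XX @ [l]) r"
  have "braid_eq [l] ((Zw @ XX) @ [l])"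
    using be_congR[OF be_inv_l[of XX], of "[l]"] by (simp add: braid_eq.sym)
  also have "braid_eq ((Zw @ XX) @ [l]) (Zw @ r)" using be_congL[OF h, of Zw] by simp
  finally show ?thesis .
qed

lemma E1: "braid_eq [s1] (Zw @ Yw @ Yw @ Xw)"
proof (rule letter_from_XX)
  show "braid_eq (XX @ [s1]) (Yw @ Yw @ Xw)"
    using be_congR[OF Y3, of "[s1]"] by (simp add: braid_eq.sym)
qed

lemma E2: "braid_eq [s2] (Zw @ Xw @ Yw @ Yw)"
  by (rule letter_from_XX) (simp add: braid_eq.refl)

lemma E3: "braid_eq [inv_letter s1] (Zw @ Xw @ Yw)"
proof (rule letter_from_XX)
  have "XX @ [inv_letter s1] = (Xw @ Yw) @ [s1, inv_letter s1] @ []" by simp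
  also have "braid_eq \<dots> ((Xw @ Yw) @ [] @ [])" by (rule be_cong, rule be_cancel1)
  finally show "braid_eq (XX @ [inv_letter s1]) (Xw @ Yw)" by simp
qed

lemma E4: "braid_eq [inv_letter s2] (Zw @ Yw @ Xw)"
proof (rule letter_from_XX)
  have "braid_eq (XX @ [inv_letter s2]) ((Yw @ Yw @ Yw) @ [inv_letter s2])"
    by (rule be_congR, rule braid_eq.sym, rule Y3)
  also have "(Yw @ Yw @ Yw) @ [inv_letter s2] = (Yw @ Xw) @ [s2, inv_letter s2] @ []" by simp
  also have "braid_eq \<dots> ((Yw @ Xw) @ [] @ [])" by (rule be_cong, rule be_cancel1)
  finally show "braid_eq (XX @ [inv_letter s2]) (Yw @ Xw)" by simp
qed

fun step :: "int \<times> bool \<times> nat list \<times> nat \<Rightarrow> letter \<Rightarrow> int \<times> bool \<times> nat list \<times> nat" where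
  "step st (Sig1, True) = mx (my (my (dec st)))"
| "step st (Sig2, True) = my (my (mx (dec st)))"
| "step st (Sig1, False) = my (mx (dec st))"
| "step st (Sig2, False) = mx (my (dec st))"

lemma valid_step: "valid st \<Longrightarrow> valid (step st l)"
  by (cases "(st, l)" rule: step.cases) (auto intro!: valid_my valid_mx valid_dec simp del: valid.simps)

lemma realize_step: "braid_eq (realize st @ [l]) (realize (step st l))"
proof -
  have RX: "braid_eq (realize s @ Xw @ w) (realize (mx s) @ w)" for s w
    using be_congR[OF realize_X[of s], of w] by simp
  have RX0: "braid_eq (realize s @ Xw) (realize (mx s))" for s
    using realize_X by simp
  have RY: "braid_eq (realize s @ Yw @ w) (realize (my s) @ w)" for s w
    using be_congR[OF realize_Y[of s], of w] by simp
  have RY0: "braid_eq (realize s @ Yw) (realize (my s))" for s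
    using realize_Y by simp
  have RZ: "braid_eq (realize s @ Zw @ w) (realize (dec s) @ w)" for s w
    using be_congR[OF realize_Z[of s], of w] by simp
  have L: "braid_eq [l'] (Zw @ w) \<Longrightarrow> braid_eq (realize st @ [l']) (realize st @ Zw @ w)" for w l'
    by (rule be_congL)
  note T = braid_eq.trans
  consider "l = (Sig1, True)" | "l = (Sig1, False)" | "l = (Sig2, True)" | "l = (Sig2, False)"
    by (cases l; cases "fst l"; cases "snd l") auto
  then show ?thesis
  proof cases
    case 1
    show ?thesis unfolding 1 step.simps
      by (rule T[OF L[OF E1]], rule T[OF RZ], rule T[OF RY], rule T[OF RY], rule RX0)
  next
    case 2
    have e: "braid_eq [(Sig1, False)] (Zw @ Xw @ Yw)" using E3 by (simp add: inv_letter_def)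
    show ?thesis unfolding 2 step.simps
      by (rule T[OF L[OF e]], rule T[OF RZ], rule T[OF RX], rule RY0)
  next
    case 3
    show ?thesis unfolding 3 step.simps
      by (rule T[OF L[OF E2]], rule T[OF RZ], rule T[OF RX], rule T[OF RY], rule RY0)
  next
    case 4
    have e: "braid_eq [(Sig2, False)] (Zw @ Yw @ Xw)" using E4 by (simp add: inv_letter_def)
    show ?thesis unfolding 4 step.simps
      by (rule T[OF L[OF e]], rule T[OF RZ], rule T[OF RY], rule RX0)
  qed
qed

definition NF :: "word \<Rightarrow> int \<times> bool \<times> nat list \<times> nat" where
  "NF w = foldl step (0, False, [], 0) w"

lemma NF_props: "braid_eq w (realize (NF w)) \<and> valid (NF w)"
proof (induction w rule: rev_induct)
  case Nil then show ?case by (simp add: NF_def Dw_def body_def Yp_def braid_eq.refl)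
next
  case (snoc l w)
  have "braid_eq (w @ [l]) (realize (NF w) @ [l])" using snoc be_congR by blast
  also have "braid_eq (realize (NF w) @ [l]) (realize (NF (w @ [l])))"
    using realize_step[of "NF w" l] by (simp add: NF_def)
  finally show ?case using snoc valid_step by (simp add: NF_def del: valid.simps)
qed


definition negI :: mat2 where "negI = (-1, 0, 0, -1)"

lemma phi_rep: "phi W = negI \<Longrightarrow> phi (concat (replicate k W)) = (if even k then mid else negI)"
  by (induction k) (auto simp: phi_append negI_def mid_def mmul_def)

lemma phi_XX: "phi XX = negI" by (simp add: negI_def mid_def mmul_def)
lemma phi_Zw: "phi Zw = negI" by (simp add: negI_def mid_def mmul_def inv_letter_def)

lemma phi_D: "phi (Dw m) = (if even m then mid else negI)"
  unfolding Dw_def using phi_rep[OF phi_XX, of "nat m"] phi_rep[OF phi_Zw, of "nat (-m)"]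
  by (auto simp: even_nat_iff simp del: inv_word_simps)

lemma exp_rep: "exp_sum (concat (replicate k W)) = int k * exp_sum W"
  by (induction k) (auto simp: exp_append algebra_simps)

lemma exp_XX: "exp_sum XX = 6" by simp
lemma exp_Zw: "exp_sum Zw = -6" by (simp add: inv_letter_def)
lemma exp_D: "exp_sum (Dw m) = 6 * m"
  unfolding Dw_def using exp_rep[of "nat m" XX] exp_rep[of "nat (-m)" Zw] exp_XX exp_Zw
  by (auto simp del: inv_word_simps exp_sum.simps)

fun smul :: "int \<Rightarrow> mat2 \<Rightarrow> mat2" where
  "smul k (a, b, c, d) = (k * a, k * b, k * c, k * d)"

lemma smul_mmul: "mmul (smul k A) B = smul k (mmul A B)" "mmul A (smul k B) = smul k (mmul A B)"
  by (cases A; cases B; simp add: mmul_def algebra_simps)+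
lemma smul_smul: "smul k (smul l A) = smul (k * l) A"
  by (cases A) (simp add: algebra_simps)

definition Lm :: mat2 where "Lm = (1, 0, 1, 1)"
definition Rm :: mat2 where "Rm = (1, 1, 0, 1)"
definition Sm :: mat2 where "Sm = (0, 1, -1, 0)"

fun Q :: "nat list \<Rightarrow> mat2" where
  "Q [] = mid"
| "Q (e # es) = mmul (if e = 1 then Lm else Rm) (Q es)"

lemma phi_YpX1: "phi (Yp 1 @ Xw) = smul (-1) Lm"
  by (simp add: Yp_def Lm_def mmul_def mid_def)
lemma phi_YpX2: "phi (Yp 2 @ Xw) = smul (-1) Rm"
  by (simp add: Yp_def Rm_def mmul_def mid_def numeral_2_eq_2)

lemma phi_mid_part: "set es \<subseteq> {1, 2} \<Longrightarrow>
  \<exists>k. (k = 1 \<or> k = -1) \<and> phi (concat (map (\<lambda>e. Yp e @ Xw) es)) = smul k (Q es)"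
proof (induction es)
  case Nil then show ?case by (auto simp: mid_def)
next
  case (Cons e es)
  then obtain k where k: "k = 1 \<or> k = -1" "phi (concat (map (\<lambda>e. Yp e @ Xw) es)) = smul k (Q es)"
    by auto
  have e: "phi (Yp e @ Xw) = smul (-1) (if e = 1 then Lm else Rm)"
    using Cons.prems phi_YpX1 phi_YpX2 by auto
  have "phi (concat (map (\<lambda>e. Yp e @ Xw) (e # es))) = mmul (phi (Yp e @ Xw)) (phi (concat (map (\<lambda>e. Yp e @ Xw) es)))"
    by (simp only: list.map concat.simps phi_append[of "Yp e @ Xw"])
  also have "\<dots> = smul (-k) (Q (e # es))"
    by (simp only: e k(2) smul_mmul smul_smul Q.simps) simp
  finally have "phi (concat (map (\<lambda>e. Yp e @ Xw) (e # es))) = smul (-k) (Q (e # es))" .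
  then show ?case using k by (intro exI[of _ "-k"]) auto
qed

lemma Q_inv: "case Q es of (p, q, r, s) \<Rightarrow> p \<ge> 1 \<and> s \<ge> 1 \<and> q \<ge> 0 \<and> r \<ge> 0 \<and> (es \<noteq> [] \<longrightarrow> q + r \<ge> 1)"
proof (induction es)
  case Nil then show ?case by (simp add: mid_def)
next
  case (Cons e es)
  obtain p q r s where Qe: "Q es = (p, q, r, s)" by (cases "Q es")
  then show ?case using Cons by (auto simp: Lm_def Rm_def mmul_def)
qed

lemma phi_Yp: "phi (Yp c) = (if c = 0 then mid else if c = 1 then (0, 1, -1, 1) else if c = 2 then (-1, 1, -1, 0) else phi (Yp c))"
  by (auto simp: Yp_def mmul_def mid_def numeral_2_eq_2)

lemma pingpong:
  assumes v: "valid (m, a, es, c)" and ph: "phi (realize (m, a, es, c)) = mid"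
  shows "a = False \<and> es = [] \<and> c = 0 \<and> even m"
proof -
  from v have c: "c \<le> 2" and es: "set es \<subseteq> {1,2}" by auto
  obtain k where k: "k = 1 \<or> k = -1" "phi (concat (map (\<lambda>e. Yp e @ Xw) es)) = smul k (Q es)"
    using phi_mid_part[OF es] by auto
  obtain p q r s where Qe: "Q es = (p, q, r, s)" by (cases "Q es")
  have qi: "p \<ge> 1 \<and> s \<ge> 1 \<and> q \<ge> 0 \<and> r \<ge> 0 \<and> (es \<noteq> [] \<longrightarrow> q + r \<ge> 1)"
    using Q_inv[of es] Qe by simp
  have pa: "phi (if a then Xw else []) = (if a then Sm else mid)"
    by (simp add: Sm_def mmul_def mid_def)
  have "phi (realize (m, a, es, c)) = mmul (phi (Dw m)) (mmul (phi (if a then Xw else []))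
      (mmul (phi (concat (map (\<lambda>e. Yp e @ Xw) es))) (phi (Yp c))))"
    by (simp only: realize.simps body_def phi_append)
  then have eq: "mmul (if even m then mid else negI) (mmul (if a then Sm else mid)
      (mmul (smul k (p, q, r, s)) (phi (Yp c)))) = mid"
    using ph k Qe pa phi_D by simp
  have cc: "c = 0 \<or> c = 1 \<or> c = 2" using c by auto
  define d :: int where "d = (if even m then 1 else -1)"
  have dd: "d = 1 \<or> d = -1" "(if even m then mid else negI) = (d, 0, 0, d)" "d = 1 \<Longrightarrow> even m"
    by (auto simp: d_def mid_def negI_def split: if_splits)
  have ineq: "p \<ge> 1" "s \<ge> 1" "q \<ge> 0" "r \<ge> 0" using qi by auto
  have eq2: "mmul (d, 0, 0, d) (mmul (if a then Sm else mid)
      (mmul (smul k (p, q, r, s)) (phi (Yp c)))) = mid" using eq dd(2) by simp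
  have "a = False \<and> c = 0 \<and> q = 0 \<and> r = 0 \<and> d = k"
    using eq2 cc k(1) dd(1) ineq
    by (cases a; elim disjE; simp add: phi_Yp Sm_def mid_def mmul_def)
  moreover have "es = []" using qi calculation by auto
  moreover have "k = 1" using k(2) calculation by (simp add: mid_def)
  ultimately have "a = False \<and> c = 0 \<and> q = 0 \<and> r = 0 \<and> even m" using dd(3) by auto
  then show ?thesis using qi by auto
qed

lemma kernel: "phi u = mid \<Longrightarrow> \<exists>m. even m \<and> braid_eq u (Dw m)"
proof -
  assume h: "phi u = mid"
  obtain m a es c where st: "NF u = (m, a, es, c)" by (cases "NF u")
  have b: "braid_eq u (realize (m, a, es, c))" and v: "valid (m, a, es, c)"
    using NF_props[of u] st by auto
  have "phi (realize (m, a, es, c)) = mid" using phi_be[OF b] h by simp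
  then have "a = False \<and> es = [] \<and> c = 0 \<and> even m" using pingpong v by blast
  then show ?thesis using b by (auto simp: body_def Yp_def)
qed


lemma img_pre: "phi w = mmul (letter_mat l) A \<Longrightarrow> \<exists>w. phi w = A"
proof -
  assume h: "phi w = mmul (letter_mat l) A"
  have "phi (inv_letter l # w) = mmul (mmul (letter_mat (inv_letter l)) (letter_mat l)) A"
    using h by (simp add: mmul_assoc)
  also have "mmul (letter_mat (inv_letter l)) (letter_mat l) = mid"
    using phi_letter_inv[of "inv_letter l"] by simp
  finally have "phi (inv_letter l # w) = A" by simp
  then show ?thesis by blast
qed

lemma mdet_letter: "mdet (letter_mat l) = 1"
  by (cases l rule: letter_mat.cases) (auto simp: mdet_def)

lemma surj_T: "\<exists>w. phi w = (1, b, 0, 1)"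
proof (induction b rule: int_induct[where k = 0])
  case base then show ?case by (intro exI[of _ "[]"]) (simp add: mid_def)
next
  case (step1 i)
  then obtain w where "phi w = (1, i, 0, 1)" by auto
  then have "phi (s1 # w) = (1, i + 1, 0, 1)" by (simp add: mmul_def)
  then show ?case by blast
next
  case (step2 i)
  then obtain w where "phi w = (1, i, 0, 1)" by auto
  then have "phi ((Sig1, False) # w) = (1, i - 1, 0, 1)" by (simp add: mmul_def)
  then show ?case by blast
qed

lemma surj_c0: "mdet (a, b, 0, d) = 1 \<Longrightarrow> \<exists>w. phi w = (a, b, 0, d)"
proof -
  assume h: "mdet (a, b, 0, d) = 1"
  then have ad: "a * d = 1" by (simp add: mdet_def)
  then have "(a = 1 \<and> d = 1) \<or> (a = -1 \<and> d = -1)" using zmult_eq_1_iff by blast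
  then show ?thesis
  proof
    assume "a = 1 \<and> d = 1" then show ?thesis using surj_T by auto
  next
    assume a: "a = -1 \<and> d = -1"
    obtain w where "phi w = (1, -b, 0, 1)" using surj_T by auto
    then have "phi (XX @ w) = (a, b, 0, d)" using a phi_XX phi_append[of XX w] by (simp add: negI_def mmul_def del: phi.simps)
    then show ?thesis by blast
  qed
qed

lemma surj_phi: "mdet (a, b, c, d) = 1 \<Longrightarrow> \<exists>w. phi w = (a, b, c, d)"
proof (induction "nat (\<bar>a\<bar> + \<bar>c\<bar>)" arbitrary: a b c d rule: less_induct)
  case less
  have H: "\<exists>w. phi w = (a, b, c, d)" if m: "mmul (letter_mat l) (a, b, c, d) = (a', b', c', d')"
     and lt: "nat (\<bar>a'\<bar> + \<bar>c'\<bar>) < nat (\<bar>a\<bar> + \<bar>c\<bar>)" for l a' b' c' d'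
  proof -
    have "mdet (a', b', c', d') = 1" using m less.prems by (metis mdet_mul mdet_letter mult_1)
    then obtain w where "phi w = (a', b', c', d')" using less.hyps[OF lt] by blast
    then show ?thesis using m img_pre by metis
  qed
  show ?case
  proof (cases "c = 0")
    case True then show ?thesis using surj_c0 less.prems by simp
  next
    case c0: False
    show ?thesis
    proof (cases "a = 0")
      case True
      then have B: "mmul (letter_mat (Sig2, True)) (mmul (letter_mat (Sig1, True)) (a, b, c, d)) = (c, b + d, 0, -b)"
        by (simp add: mmul_def)
      have "mdet (c, b + d, 0, -b) = 1" using less.prems True by (simp add: mdet_def mult.commute)
      then obtain w where "phi w = (c, b + d, 0, -b)" using surj_c0 by blast
      then show ?thesis using B img_pre by metis
    next
      case a0: False
      show ?thesis
      proof (cases "\<bar>c\<bar> \<le> \<bar>a\<bar>")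
        case True
        show ?thesis
        proof (cases "(0 < a) = (0 < c)")
          case True
          show ?thesis
            by (rule H[of "(Sig1, False)" "a - c" "b - d" c d]) (use True \<open>\<bar>c\<bar> \<le> \<bar>a\<bar>\<close> a0 c0 in \<open>auto simp: mmul_def\<close>)
        next
          case False
          show ?thesis
            by (rule H[of "(Sig1, True)" "a + c" "b + d" c d]) (use False \<open>\<bar>c\<bar> \<le> \<bar>a\<bar>\<close> a0 c0 in \<open>auto simp: mmul_def\<close>)
        qed
      next
        case False
        show ?thesis
        proof (cases "(0 < a) = (0 < c)")
          case True
          show ?thesis
            by (rule H[of "(Sig2, True)" a b "c - a" "d - b"]) (use True \<open>\<not> \<bar>c\<bar> \<le> \<bar>a\<bar>\<close> a0 c0 in \<open>auto simp: mmul_def\<close>)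
        next
          case False
          show ?thesis
            by (rule H[of "(Sig2, False)" a b "c + a" "d + b"]) (use False \<open>\<not> \<bar>c\<bar> \<le> \<bar>a\<bar>\<close> a0 c0 in \<open>auto simp: mmul_def\<close>)
        qed
      qed
    qed
  qed
qed


lemma K_main: "phi g = phi h \<Longrightarrow> exp_sum g = exp_sum h \<Longrightarrow> braid_eq g h"
proof -
  assume p: "phi g = phi h" and e: "exp_sum g = exp_sum h"
  have "phi (g @ inv_word h) = mid" using p phi_inv_r[of h] by (simp add: phi_append del: phi.simps)
  then obtain m where m: "even m" "braid_eq (g @ inv_word h) (Dw m)" using kernel by blast
  have "exp_sum (g @ inv_word h) = 0" using e by (simp add: exp_append exp_inv)
  then have "m = 0" using exp_be[OF m(2)] exp_D by simp
  then have z: "braid_eq (g @ inv_word h) []" using m by (simp add: Dw_def)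
  have "braid_eq g (g @ (inv_word h @ h))" using be_congL[OF be_inv_l[of h], of g]
    by (simp add: braid_eq.sym)
  moreover have "braid_eq (g @ inv_word h @ h) h" using be_congR[OF z, of h] by simp
  ultimately show ?thesis using braid_eq.trans by blast
qed

lemma mtr_comm: "mtr (mmul A B) = mtr (mmul B A)"
  by (cases A; cases B) (simp add: mmul_def mtr_def algebra_simps)

fun adj :: "mat2 \<Rightarrow> mat2" where "adj (p, q, r, s) = (s, -q, -r, p)"

lemma adj_inv: "mdet P = 1 \<Longrightarrow> mmul (adj P) P = mid \<and> mmul P (adj P) = mid"
  by (cases P) (simp add: mmul_def mid_def mdet_def algebra_simps)
lemma mdet_adj: "mdet (adj P) = mdet P"
  by (cases P) (simp add: mdet_def algebra_simps)

lemma sl2_conj_refl: "sl2_conj A A"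
proof -
  have "mid \<in> SL2Z" by (simp add: SL2Z_def mid_def mdet_def)
  then show ?thesis unfolding sl2_conj_def by (metis mmul_mid)
qed

lemma sl2_conj_sym: "sl2_conj A B \<Longrightarrow> sl2_conj B A"
proof -
  assume "sl2_conj A B"
  then obtain P where P: "mdet P = 1" "mmul P A = mmul B P" by (auto simp: sl2_conj_def SL2Z_def)
  have "mmul (adj P) B = mmul (adj P) (mmul B (mmul P (adj P)))" using adj_inv[OF P(1)] by simp
  also have "\<dots> = mmul (mmul (adj P) (mmul P A)) (adj P)" using P(2) by (simp add: mmul_assoc)
  also have "\<dots> = mmul A (adj P)" using adj_inv[OF P(1)] by (simp add: mmul_assoc[symmetric])
  finally have "mmul (adj P) B = mmul A (adj P)" .
  moreover have "adj P \<in> SL2Z" using P(1) mdet_adj by (simp add: SL2Z_def)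
  ultimately show ?thesis unfolding sl2_conj_def by blast
qed

lemma sl2_conj_trans: "sl2_conj A B \<Longrightarrow> sl2_conj B C \<Longrightarrow> sl2_conj A C"
proof -
  assume "sl2_conj A B" "sl2_conj B C"
  then obtain P Q where P: "mdet P = 1" "mmul P A = mmul B P" and Q: "mdet Q = 1" "mmul Q B = mmul C Q"
    by (auto simp: sl2_conj_def SL2Z_def)
  have "mmul (mmul Q P) A = mmul C (mmul Q P)"
    by (metis P(2) Q(2) mmul_assoc)
  then show ?thesis unfolding sl2_conj_def SL2Z_def using P(1) Q(1) mdet_mul
    by (intro bexI[of _ "mmul Q P"]) auto
qed

lemma sl2_conj_mtr: "sl2_conj A B \<Longrightarrow> mtr A = mtr B"
proof -
  assume "sl2_conj A B"
  then obtain P where P: "mdet P = 1" "mmul P A = mmul B P" by (auto simp: sl2_conj_def SL2Z_def)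
  have "mtr B = mtr (mmul B (mmul P (adj P)))" using adj_inv[OF P(1)] by simp
  also have "\<dots> = mtr (mmul (mmul P A) (adj P))" using P(2) by (simp add: mmul_assoc)
  also have "\<dots> = mtr (mmul (adj P) (mmul P A))" by (rule mtr_comm)
  also have "\<dots> = mtr A" using adj_inv[OF P(1)] by (simp add: mmul_assoc[symmetric])
  finally show ?thesis by simp
qed

lemma sl2_class_eq: "A \<in> SL2Z \<Longrightarrow> B \<in> SL2Z \<Longrightarrow> sl2_class A = sl2_class B \<longleftrightarrow> sl2_conj A B"
proof
  assume "A \<in> SL2Z" "B \<in> SL2Z" "sl2_class A = sl2_class B"
  then have "B \<in> sl2_class A" using sl2_conj_refl by (auto simp: sl2_class_def)
  then show "sl2_conj A B" by (simp add: sl2_class_def)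
next
  assume h: "sl2_conj A B"
  show "sl2_class A = sl2_class B"
  proof (rule set_eqI)
    fix x show "x \<in> sl2_class A \<longleftrightarrow> x \<in> sl2_class B"
      using h by (simp add: sl2_class_def) (meson sl2_conj_sym sl2_conj_trans)
  qed
qed

lemma phi_SL: "phi w \<in> SL2Z" by (simp add: SL2Z_def mdet_phi)

lemma surj_phi': "A \<in> SL2Z \<Longrightarrow> \<exists>w. phi w = A"
  using surj_phi[of "fst A" "fst (snd A)" "fst (snd (snd A))" "snd (snd (snd A))"]
  by (simp add: SL2Z_def)

lemma conj_iff: "braid_conj u v \<longleftrightarrow> sl2_conj (phi u) (phi v) \<and> exp_sum u = exp_sum v"
proof
  assume "braid_conj u v"
  then obtain w where w: "braid_eq (w @ u @ inv_word w) v" by (auto simp: braid_conj_def)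
  have pv: "phi v = mmul (phi w) (mmul (phi u) (phi (inv_word w)))"
    using phi_be[OF w] by (simp add: phi_append del: phi.simps)
  have "mmul (phi w) (phi u) = mmul (phi v) (phi w)"
    using pv phi_inv_l[of w] by (simp add: mmul_assoc)
  then have "sl2_conj (phi u) (phi v)" unfolding sl2_conj_def using phi_SL by blast
  moreover have "exp_sum u = exp_sum v" using exp_be[OF w] by (simp add: exp_append exp_inv)
  ultimately show "sl2_conj (phi u) (phi v) \<and> exp_sum u = exp_sum v" by simp
next
  assume "sl2_conj (phi u) (phi v) \<and> exp_sum u = exp_sum v"
  then obtain P where P: "P \<in> SL2Z" "mmul P (phi u) = mmul (phi v) P" and e: "exp_sum u = exp_sum v"
    by (auto simp: sl2_conj_def)
  obtain w where w: "phi w = P" using surj_phi'[OF P(1)] by blast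
  have "phi (w @ u @ inv_word w) = mmul (mmul (phi v) (phi w)) (phi (inv_word w))"
    using P(2) w by (simp add: phi_append mmul_assoc[symmetric] del: phi.simps)
  also have "\<dots> = phi v" using phi_inv_r[of w] by (simp add: mmul_assoc)
  finally have "braid_eq (w @ u @ inv_word w) v"
    using e by (intro K_main) (auto simp: exp_append exp_inv)
  then show "braid_conj u v" by (auto simp: braid_conj_def)
qed

lemma braid_conj_refl: "braid_conj u u" by (simp add: conj_iff sl2_conj_refl)
lemma braid_conj_sym: "braid_conj u v \<Longrightarrow> braid_conj v u" by (simp add: conj_iff sl2_conj_sym)
lemma braid_conj_trans: "braid_conj u v \<Longrightarrow> braid_conj v w \<Longrightarrow> braid_conj u w"
  by (auto simp: conj_iff intro: sl2_conj_trans)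

lemma braid_class_eq: "braid_class u = braid_class v \<longleftrightarrow> braid_conj u v"
proof
  assume "braid_class u = braid_class v"
  then have "v \<in> braid_class u" using braid_conj_refl by (auto simp: braid_class_def)
  then show "braid_conj u v" by (simp add: braid_class_def)
next
  assume h: "braid_conj u v"
  show "braid_class u = braid_class v"
  proof (rule set_eqI)
    fix x show "x \<in> braid_class u \<longleftrightarrow> x \<in> braid_class v"
      using h by (simp add: braid_class_def) (meson braid_conj_sym braid_conj_trans)
  qed
qed

lemma rep_conj: "braid_conj u (SOME w. w \<in> braid_class u)"
proof -
  have "u \<in> braid_class u" by (simp add: braid_class_def braid_conj_refl)
  then have "(SOME w. w \<in> braid_class u) \<in> braid_class u" by (rule someI)
  then show ?thesis by (simp add: braid_class_def)
qed

lemma phi_star_class: "phi_star (braid_class u) = sl2_class (phi u)"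
proof -
  have "sl2_conj (phi u) (phi (SOME w. w \<in> braid_class u))" using rep_conj conj_iff by blast
  then show ?thesis unfolding phi_star_def using sl2_class_eq phi_SL by (metis)
qed

lemma X_mem: "C \<in> X t n \<longleftrightarrow> (\<exists>w. C = braid_class w \<and> btr w = t \<and> exp_sum w = n)"
  by (auto simp: X_def)

lemma conj_12: "sl2_conj (phi g) (phi h) \<Longrightarrow> 12 dvd (exp_sum g - exp_sum h)"
proof -
  assume "sl2_conj (phi g) (phi h)"
  then obtain P where P: "P \<in> SL2Z" "mmul P (phi g) = mmul (phi h) P" by (auto simp: sl2_conj_def)
  obtain w where w: "phi w = P" using surj_phi'[OF P(1)] by blast
  have "phi (w @ g @ inv_word w) = mmul (mmul (phi h) (phi w)) (phi (inv_word w))"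
    using P(2) w by (simp add: phi_append mmul_assoc[symmetric] del: phi.simps)
  also have "\<dots> = phi h" using phi_inv_r[of w] by (simp add: mmul_assoc)
  finally have c: "phi (w @ g @ inv_word w) = phi h" .
  have "phi ((w @ g @ inv_word w) @ inv_word h) = mmul (phi (w @ g @ inv_word w)) (phi (inv_word h))"
    by (rule phi_append)
  then have "phi ((w @ g @ inv_word w) @ inv_word h) = mid" using c phi_inv_r[of h] by simp
  then obtain m where m: "even m" "braid_eq ((w @ g @ inv_word w) @ inv_word h) (Dw m)"
    using kernel by blast
  have "exp_sum g - exp_sum h = 6 * m" using exp_be[OF m(2)] exp_D by (simp add: exp_append exp_inv)
  then show ?thesis using m(1) by auto
qed


lemma be_conj: "braid_eq u v \<Longrightarrow> braid_conj u v"
  unfolding braid_conj_def by (intro exI[of _ "[]"]) simp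

lemma scal_central: "mmul A (k, 0, 0, k) = mmul (k, 0, 0, k) A"
  by (cases A) (simp add: mmul_def algebra_simps)

lemma sl2_conj_mulc: "sl2_conj A B \<Longrightarrow> sl2_conj (mmul A (k,0,0,k)) (mmul B (k,0,0,k))"
proof -
  assume "sl2_conj A B"
  then obtain P where P: "P \<in> SL2Z" "mmul P A = mmul B P" by (auto simp: sl2_conj_def)
  have "mmul P (mmul A (k,0,0,k)) = mmul (mmul B (k,0,0,k)) P"
    by (metis P(2) mmul_assoc scal_central)
  then show ?thesis using P(1) by (auto simp: sl2_conj_def)
qed

definition mulc :: "word \<Rightarrow> word set \<Rightarrow> word set" where
  "mulc c C = braid_class ((SOME w. w \<in> C) @ c)"

lemma mulc_class: assumes pc: "phi c = (k, 0, 0, k)"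
  shows "mulc c (braid_class u) = braid_class (u @ c)"
proof -
  define v where "v = (SOME w. w \<in> braid_class u)"
  have "braid_conj u v" unfolding v_def by (rule rep_conj)
  then have "sl2_conj (phi u) (phi v) \<and> exp_sum u = exp_sum v" by (simp add: conj_iff)
  then have "sl2_conj (phi (v @ c)) (phi (u @ c)) \<and> exp_sum (v @ c) = exp_sum (u @ c)"
    using sl2_conj_mulc sl2_conj_sym pc by (simp add: phi_append exp_append del: phi.simps)
  then have "braid_conj (v @ c) (u @ c)" by (simp add: conj_iff)
  then show ?thesis unfolding mulc_def v_def[symmetric] by (simp add: braid_class_eq)
qed

lemma btr_scal: "phi c = (k, 0, 0, k) \<Longrightarrow> btr (u @ c) = k * btr u"
  by (cases "phi u") (simp add: btr_def phi_append mtr_def mmul_def algebra_simps del: phi.simps)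

lemma mulc_bij:
  assumes pc: "phi c = (k, 0, 0, k)" and pc': "phi c' = (k, 0, 0, k)" and kk: "k * k = 1"
    and ec: "exp_sum c' = - exp_sum c"
  shows "bij_betw (mulc c) (X t n) (X (k * t) (n + exp_sum c))"
proof (rule bij_betw_byWitness[where f' = "mulc c'"])
  have e1: "braid_eq (u @ c @ c') u" for u
  proof -
    have "phi (c @ c') = mid" using pc pc' kk by (simp add: phi_append mmul_def mid_def del: phi.simps)
    then have "braid_eq (c @ c') []" using ec by (intro K_main) (simp_all add: exp_append mid_def)
    then show ?thesis using be_congL[of "c @ c'" "[]" u] by simp
  qed
  have e2: "braid_eq (u @ c' @ c) u" for u
  proof -
    have "phi (c' @ c) = mid" using pc pc' kk by (simp add: phi_append mmul_def mid_def del: phi.simps)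
    then have "braid_eq (c' @ c) []" using ec by (intro K_main) (simp_all add: exp_append mid_def)
    then show ?thesis using be_congL[of "c' @ c" "[]" u] by simp
  qed
  show "\<forall>C\<in>X t n. mulc c' (mulc c C) = C"
  proof
    fix C assume "C \<in> X t n"
    then obtain u where u: "C = braid_class u" by (auto simp: X_mem)
    have "mulc c' (mulc c C) = braid_class ((u @ c) @ c')" by (simp add: u mulc_class[OF pc] mulc_class[OF pc'])
    also have "\<dots> = braid_class u" using e1[of u] braid_class_eq be_conj by simp
    finally show "mulc c' (mulc c C) = C" using u by simp
  qed
  show "\<forall>C\<in>X (k * t) (n + exp_sum c). mulc c (mulc c' C) = C"
  proof
    fix C assume "C \<in> X (k * t) (n + exp_sum c)"
    then obtain u where u: "C = braid_class u" by (auto simp: X_mem)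
    have "mulc c (mulc c' C) = braid_class ((u @ c') @ c)" by (simp add: u mulc_class[OF pc] mulc_class[OF pc'])
    also have "\<dots> = braid_class u" using e2[of u] braid_class_eq be_conj by simp
    finally show "mulc c (mulc c' C) = C" using u by simp
  qed
  show "mulc c ` X t n \<subseteq> X (k * t) (n + exp_sum c)"
  proof
    fix C assume "C \<in> mulc c ` X t n"
    then obtain w where w: "C = mulc c (braid_class w)" "btr w = t" "exp_sum w = n"
      by (auto simp: X_mem)
    have "btr (w @ c) = k * t" using btr_scal[OF pc] w(2) by simp
    moreover have "exp_sum (w @ c) = n + exp_sum c" using w(3) by (simp add: exp_append)
    ultimately show "C \<in> X (k * t) (n + exp_sum c)" using w(1) mulc_class[OF pc] unfolding X_mem by blast
  qed
  show "mulc c' ` X (k * t) (n + exp_sum c) \<subseteq> X t n"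
  proof
    fix C assume "C \<in> mulc c' ` X (k * t) (n + exp_sum c)"
    then obtain w where w: "C = mulc c' (braid_class w)" "btr w = k * t" "exp_sum w = n + exp_sum c"
      by (auto simp: X_mem)
    have "btr (w @ c') = t" using btr_scal[OF pc'] w(2) kk by (simp add: mult.assoc[symmetric])
    moreover have "exp_sum (w @ c') = n" using w(3) ec by (simp add: exp_append)
    ultimately show "C \<in> X t n" using w(1) mulc_class[OF pc'] unfolding X_mem by blast
  qed
qed

definition negM :: "mat2 set \<Rightarrow> mat2 set" where
  "negM K = (\<lambda>B. mmul B negI) ` K"

lemma negI_negI: "mmul (mmul B negI) negI = B"
  by (cases B) (simp add: mmul_def negI_def)

lemma negM_class: "negM (sl2_class A) = sl2_class (mmul A negI)"
proof -
  have c: "mmul A negI = mmul negI A" for A using scal_central[of A "-1"] by (simp add: negI_def)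
  have dn: "mdet (mmul B negI) = mdet B" for B by (simp only: mdet_mul) (simp add: negI_def mdet_def)
  have "sl2_conj A B \<Longrightarrow> sl2_conj (mmul A negI) (mmul B negI)" for A B
    using sl2_conj_mulc[of A B "-1"] by (simp add: negI_def)
  note cn = this
  show ?thesis
  proof (rule set_eqI)
    fix x
    show "x \<in> negM (sl2_class A) \<longleftrightarrow> x \<in> sl2_class (mmul A negI)"
    proof
      assume "x \<in> negM (sl2_class A)"
      then obtain B where B: "B \<in> sl2_class A" "x = mmul B negI" by (auto simp: negM_def)
      then show "x \<in> sl2_class (mmul A negI)" using cn dn by (simp add: sl2_class_def SL2Z_def)
    next
      assume x: "x \<in> sl2_class (mmul A negI)"
      have "sl2_conj (mmul (mmul A negI) negI) (mmul x negI)" using x cn by (simp add: sl2_class_def)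
      then have "mmul x negI \<in> sl2_class A" using x dn by (simp add: sl2_class_def SL2Z_def negI_negI)
      moreover have "x = mmul (mmul x negI) negI" by (simp add: negI_negI)
      ultimately show "x \<in> negM (sl2_class A)" unfolding negM_def by blast
    qed
  qed
qed

lemma negM_negM: "negM (negM K) = K"
  by (simp add: negM_def image_image negI_negI)

lemma negM_bij: "bij_betw negM (Y t) (Y (-t))"
proof (rule bij_betw_byWitness[where f' = negM])
  have mt: "mtr (mmul A negI) = - mtr A" for A by (cases A) (simp add: mtr_def mmul_def negI_def)
  have dn: "mdet (mmul B negI) = mdet B" for B by (simp only: mdet_mul) (simp add: negI_def mdet_def)
  show "\<forall>a\<in>Y t. negM (negM a) = a" "\<forall>a\<in>Y (- t). negM (negM a) = a" by (simp_all add: negM_negM)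
  have gen: "negM ` Y s \<subseteq> Y (- s)" for s
  proof
    fix K assume "K \<in> negM ` Y s"
    then obtain A where A: "K = negM (sl2_class A)" "mdet A = 1" "mtr A = s"
      by (auto simp: Y_def SL2Z_def)
    have "K = sl2_class (mmul A negI)" using A(1) negM_class by simp
    moreover have "mdet (mmul A negI) = 1" "mtr (mmul A negI) = - s" using A dn mt by auto
    ultimately show "K \<in> Y (- s)" unfolding Y_def SL2Z_def by blast
  qed
  show "negM ` Y t \<subseteq> Y (- t)" by (rule gen)
  show "negM ` Y (- t) \<subseteq> Y t" using gen[of "-t"] by simp
qed

lemma part1:
  fixes t n :: int
  shows "inj_on phi_star (X t n)"
proof -
  show "inj_on phi_star (X t n)"
  proof (rule inj_onI)
    fix C D assume "C \<in> X t n" "D \<in> X t n" and eq: "phi_star C = phi_star D"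
    then obtain g h where g: "C = braid_class g" "exp_sum g = n" and h: "D = braid_class h" "exp_sum h = n"
      by (auto simp: X_mem)
    have "sl2_conj (phi g) (phi h)" using eq g h phi_star_class sl2_class_eq phi_SL by metis
    then show "C = D" using g h by (simp add: braid_class_eq conj_iff)
  qed
qed

lemma part2:
  fixes t n :: int
  shows "\<exists>\<alpha> \<beta>. bij_betw \<alpha> (X t n) (X (-t) (n + 6)) \<and> bij_betw \<beta> (Y t) (Y (-t)) \<and>
            (\<forall>C \<in> X t n. phi_star (\<alpha> C) = \<beta> (phi_star C))"
proof -
  have pXX: "phi XX = (-1, 0, 0, -1)" using phi_XX by (simp add: negI_def)
  have pZ: "phi Zw = (-1, 0, 0, -1)" using phi_Zw by (simp add: negI_def)
  have e6: "exp_sum Zw = - exp_sum XX" by (simp add: inv_letter_def)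
  have b1: "bij_betw (mulc XX) (X t n) (X (-t) (n + 6))"
    using mulc_bij[OF pXX pZ _ e6, of t n] by simp
  have "\<forall>C \<in> X t n. phi_star (mulc XX C) = negM (phi_star C)"
  proof
    fix C assume "C \<in> X t n"
    then obtain u where u: "C = braid_class u" by (auto simp: X_mem)
    show "phi_star (mulc XX C) = negM (phi_star C)"
      unfolding u mulc_class[OF pXX] phi_star_class negM_class
      using phi_append[of u XX] phi_XX by (simp del: phi.simps)
  qed
  then show "\<exists>\<alpha> \<beta>. bij_betw \<alpha> (X t n) (X (-t) (n + 6)) \<and> bij_betw \<beta> (Y t) (Y (-t)) \<and>
            (\<forall>C \<in> X t n. phi_star (\<alpha> C) = \<beta> (phi_star C))"
    using b1 negM_bij by blast
qed

lemma part3: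
  fixes t n :: int
  shows "\<exists>\<gamma>. bij_betw \<gamma> (X t n) (X t (n + 12)) \<and> (\<forall>C \<in> X t n. phi_star (\<gamma> C) = phi_star C)"
proof -
  have p4: "phi (XX @ XX) = (1, 0, 0, 1)" using phi_append[of XX XX] phi_XX by (simp add: negI_def mmul_def del: phi.simps)
  have p4': "phi (Zw @ Zw) = (1, 0, 0, 1)" using phi_append[of Zw Zw] phi_Zw by (simp add: negI_def mmul_def del: phi.simps inv_word_simps)
  have e4: "exp_sum (Zw @ Zw) = - exp_sum (XX @ XX)" using exp_Zw exp_XX by (simp only: exp_append)
  have b: "bij_betw (mulc (XX @ XX)) (X t n) (X t (n + 12))"
    using mulc_bij[OF p4 p4' _ e4, of t n] by (simp only: exp_append exp_XX) simp
  have "\<forall>C \<in> X t n. phi_star (mulc (XX @ XX) C) = phi_star C"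
  proof
    fix C assume "C \<in> X t n"
    then obtain u where u: "C = braid_class u" by (auto simp: X_mem)
    show "phi_star (mulc (XX @ XX) C) = phi_star C"
      unfolding u mulc_class[OF p4] phi_star_class
      using phi_append[of u "XX @ XX"] p4 by (simp add: mid_def[symmetric] del: phi.simps)
  qed
  then show "\<exists>\<gamma>. bij_betw \<gamma> (X t n) (X t (n + 12)) \<and> (\<forall>C \<in> X t n. phi_star (\<gamma> C) = phi_star C)"
    using b by blast
qed

lemma part4_inj:
  fixes t n :: int
  shows "inj_on (\<lambda>(j, C). phi_star C) (SIGMA j:{0..11::int}. X t (n + j))"
proof (rule inj_onI)
  fix p1 p2
  assume p1: "p1 \<in> (SIGMA j:{0..11::int}. X t (n + j))" and p2: "p2 \<in> (SIGMA j:{0..11::int}. X t (n + j))"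
    and eq0: "(\<lambda>(j, C). phi_star C) p1 = (\<lambda>(j, C). phi_star C) p2"
  obtain j1 C1 where pj1: "p1 = (j1, C1)" by (cases p1)
  obtain j2 C2 where pj2: "p2 = (j2, C2)" by (cases p2)
  have j1: "0 \<le> j1" "j1 \<le> 11" "C1 \<in> X t (n + j1)" using p1 unfolding pj1 by simp_all
  have j2: "0 \<le> j2" "j2 \<le> 11" "C2 \<in> X t (n + j2)" using p2 unfolding pj2 by simp_all
  have eq: "phi_star C1 = phi_star C2" using eq0 unfolding pj1 pj2 by simp
  obtain g where g: "C1 = braid_class g" "exp_sum g = n + j1" using j1(3) unfolding X_mem by blast
  obtain h where h: "C2 = braid_class h" "exp_sum h = n + j2" using j2(3) unfolding X_mem by blast
  have "sl2_class (phi g) = sl2_class (phi h)" using eq g(1) h(1) phi_star_class by simp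
  then have sc: "sl2_conj (phi g) (phi h)" using sl2_class_eq phi_SL by blast
  then have d: "12 dvd (j1 - j2)" using conj_12[OF sc] g(2) h(2) by simp
  have "j1 = j2"
  proof (rule ccontr)
    assume "j1 \<noteq> j2"
    obtain q where q: "j1 - j2 = 12 * q" using d by (elim dvdE)
    then have "q \<noteq> 0" using \<open>j1 \<noteq> j2\<close> by auto
    then have "\<bar>j1 - j2\<bar> \<ge> 12" using q by (simp add: abs_mult)
    then show False using j1 j2 by linarith
  qed
  moreover have "C1 = C2" using sc g h \<open>j1 = j2\<close> by (simp add: braid_class_eq conj_iff)
  ultimately show "p1 = p2" using pj1 pj2 by simp
qed

lemma part4_sub:
  fixes t n :: int
  shows "(\<lambda>(j, C). phi_star C) ` (SIGMA j:{0..11::int}. X t (n + j)) \<subseteq> Y t"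
proof
  fix K assume "K \<in> (\<lambda>(j, C). phi_star C) ` (SIGMA j:{0..11::int}. X t (n + j))"
  then obtain p where p: "p \<in> (SIGMA j:{0..11::int}. X t (n + j))" "K = (\<lambda>(j, C). phi_star C) p"
    by (rule imageE)
  obtain j C where pjc: "p = (j, C)" by (cases p)
  have jc: "K = phi_star C" "C \<in> X t (n + j)" using p unfolding pjc by simp_all
  obtain w where w: "C = braid_class w" "btr w = t" using jc(2) unfolding X_mem by blast
  have "K = sl2_class (phi w)" "phi w \<in> SL2Z" "mtr (phi w) = t"
    using jc(1) w by (simp_all add: phi_star_class phi_SL btr_def)
  then show "K \<in> Y t" unfolding Y_def by blast
qed

lemma part4_sup:
  fixes t n :: int
  shows "Y t \<subseteq> (\<lambda>(j, C). phi_star C) ` (SIGMA j:{0..11::int}. X t (n + j))"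
proof
  fix K assume "K \<in> Y t"
  then obtain A where A: "K = sl2_class A" "A \<in> SL2Z" "mtr A = t" unfolding Y_def by blast
  obtain w where w: "phi w = A" using surj_phi'[OF A(2)] by blast
  define j where "j = (exp_sum w - n) mod 12"
  define k where "k = - ((exp_sum w - n) div 12)"
  have "0 \<le> j" "j < 12" unfolding j_def by simp_all
  then have jr: "j \<in> {0..11}" by simp
  have kk: "12 * k = n + j - exp_sum w" unfolding k_def j_def
    using div_mult_mod_eq[of "exp_sum w - n" 12] by linarith
  define w' where "w' = w @ Dw (2 * k)"
  have pw: "phi w' = A" using w by (simp add: w'_def phi_append phi_D del: phi.simps)
  have ew: "exp_sum w' = n + j" using kk by (simp add: w'_def exp_append exp_D)
  have "braid_class w' \<in> X t (n + j)" using pw ew A(3) unfolding X_mem btr_def by blast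
  then have mem: "(j, braid_class w') \<in> (SIGMA j:{0..11::int}. X t (n + j))" using jr by simp
  have "phi_star (braid_class w') = K" using pw A(1) by (simp add: phi_star_class)
  then have "K = (\<lambda>(j, C). phi_star C) (j, braid_class w')" by simp
  then show "K \<in> (\<lambda>(j, C). phi_star C) ` (SIGMA j:{0..11::int}. X t (n + j))"
    using mem by (rule image_eqI)
qed

lemma part4:
  fixes t n :: int
  shows "bij_betw (\<lambda>(j, C). phi_star C) (SIGMA j:{0..11::int}. X t (n + j)) (Y t)"
  unfolding bij_betw_def using part4_inj part4_sub part4_sup by blast

theorem lemma2p1:
  fixes t n :: int
  shows "inj_on phi_star (X t n) \<and>
    (\<exists>\<alpha> \<beta>. bij_betw \<alpha> (X t n) (X (-t) (n + 6)) \<and> bij_betw \<beta> (Y t) (Y (-t)) \<and>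
            (\<forall>C \<in> X t n. phi_star (\<alpha> C) = \<beta> (phi_star C))) \<and>
    (\<exists>\<gamma>. bij_betw \<gamma> (X t n) (X t (n + 12)) \<and>
            (\<forall>C \<in> X t n. phi_star (\<gamma> C) = phi_star C)) \<and>
    bij_betw (\<lambda>(j, C). phi_star C) (SIGMA j:{0..11::int}. X t (n + j)) (Y t)"
  using part1 part2 part3 part4 by blast

end
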